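(* Let $\Bbbk$ be a field and $M$ a generalized Coxeter matrix. Let $\widetilde{NC}(M)$ be the $\Bbbk$-algebra generated by $\{T_i : i \in I\}$ and an extra generator $T_\infty$, subject to the braid relations of $M$ among the $T_i$ and the relations $T_i^{m_{ii}} = T_iT_\infty = T_\infty T_i = T_\infty^2 = T_\infty$ for all $i \in I$. Then $\Bbbk T_\infty$ is a two-sided ideal with $\widetilde{NC}(M)/\Bbbk T_\infty \cong NC(M)$, and there is a unique bialgebra structure on $\widetilde{NC}(M)$ in which all $T_i$ and $T_\infty$ are grouplike, namely $\widetilde{\Delta}(T_i) = T_i \otimes T_i$, $\widetilde{\Delta}(T_\infty) = T_\infty\otimes T_\infty$, $\widetilde{\varepsilon}(T_i) = \widetilde{\varepsilon}(T_\infty) = 1$.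
   Context: A generalized Coxeter matrix is a symmetric matrix $M = (m_{ij})_{i,j\in I}$, $I$ finite, with $m_{ij}\in\{2,3,\dots\}\cup\{\infty\}$ for $i\ne j$ and finite $m_{ii}\ge 2$; the braid relations are $\underbrace{T_iT_jT_i\cdots}_{m_{ij}} = \underbrace{T_jT_iT_j\cdots}_{m_{ij}}$ for $i\ne j$ with $m_{ij}<\infty$, and $NC(M)$ is $\Bbbk\langle T_i\rangle$ modulo the braid relations and $T_i^{m_{ii}}=0$. An element $g$ is grouplike if $\Delta(g) = g\otimes g$ and $\varepsilon(g)=1$. *)

theory Defs
  imports Main "HOL-Library.Extended_Nat" "HOL-Library.Function_Algebras"
begin

text \<open>An element of the free algebra over a field on an alphabet 'a is a finitely
supported function from words ('a list) to the field; the tensor square (cube) of the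
free algebra is the space of finitely supported functions on pairs (triples) of words.\<close>

definition fin_supp :: "('a \<Rightarrow> 'k::zero) \<Rightarrow> bool" where
  "fin_supp f \<longleftrightarrow> finite {x. f x \<noteq> 0}"

definition mon :: "'a \<Rightarrow> 'a \<Rightarrow> 'k::{zero,one}" where
  "mon w = (\<lambda>x. if x = w then 1 else 0)"

definition smul :: "'k::times \<Rightarrow> ('a \<Rightarrow> 'k) \<Rightarrow> 'a \<Rightarrow> 'k" where
  "smul c f = (\<lambda>x. c * f x)"

text \<open>Product in the free algebra (concatenation of words, extended bilinearly).\<close>
definition fmult :: "('a list \<Rightarrow> 'k::semiring_0) \<Rightarrow> ('a list \<Rightarrow> 'k) \<Rightarrow> 'a list \<Rightarrow> 'k" where
  "fmult f g = (\<lambda>w. \<Sum>n\<le>length w. f (take n w) * g (drop n w))"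

definition fone :: "'a list \<Rightarrow> 'k::{zero,one}" where
  "fone = mon []"

definition fmult2 :: "('a list \<times> 'a list \<Rightarrow> 'k::semiring_0) \<Rightarrow> ('a list \<times> 'a list \<Rightarrow> 'k)
    \<Rightarrow> 'a list \<times> 'a list \<Rightarrow> 'k" where
  "fmult2 f g = (\<lambda>(u, v). \<Sum>n\<le>length u. \<Sum>m\<le>length v.
       f (take n u, take m v) * g (drop n u, drop m v))"

definition tens :: "('a \<Rightarrow> 'k::times) \<Rightarrow> ('b \<Rightarrow> 'k) \<Rightarrow> 'a \<times> 'b \<Rightarrow> 'k" where
  "tens f g = (\<lambda>(u, v). f u * g v)"

definition tens3 :: "('a \<Rightarrow> 'k::times) \<Rightarrow> ('b \<Rightarrow> 'k) \<Rightarrow> ('c \<Rightarrow> 'k) \<Rightarrow> 'a \<times> 'b \<times> 'c \<Rightarrow> 'k" where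
  "tens3 f g h = (\<lambda>(u, v, w). f u * g v * h w)"

inductive_set lspan :: "('a \<Rightarrow> 'k::field) set \<Rightarrow> ('a \<Rightarrow> 'k) set" for S where
  lspan_zero: "(\<lambda>_. 0) \<in> lspan S"
| lspan_gen: "s \<in> S \<Longrightarrow> s \<in> lspan S"
| lspan_add: "a \<in> lspan S \<Longrightarrow> b \<in> lspan S \<Longrightarrow> a + b \<in> lspan S"
| lspan_smul: "a \<in> lspan S \<Longrightarrow> smul c a \<in> lspan S"

inductive_set ideal_gen :: "('a list \<Rightarrow> 'k::field) set \<Rightarrow> ('a list \<Rightarrow> 'k) set" for R where
  ideal_zero: "(\<lambda>_. 0) \<in> ideal_gen R"
| ideal_gen_in: "r \<in> R \<Longrightarrow> r \<in> ideal_gen R"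
| ideal_add: "a \<in> ideal_gen R \<Longrightarrow> b \<in> ideal_gen R \<Longrightarrow> a + b \<in> ideal_gen R"
| ideal_smul: "a \<in> ideal_gen R \<Longrightarrow> smul c a \<in> ideal_gen R"
| ideal_lmult: "a \<in> ideal_gen R \<Longrightarrow> fin_supp x \<Longrightarrow> fmult x a \<in> ideal_gen R"
| ideal_rmult: "a \<in> ideal_gen R \<Longrightarrow> fin_supp x \<Longrightarrow> fmult a x \<in> ideal_gen R"

text \<open>For an ideal J of the free algebra F, the kernel of F\<otimes>F \<rightarrow> (F/J)\<otimes>(F/J),
  i.e. J\<otimes>F + F\<otimes>J, and analogously for the threefold tensor product.\<close>
definition tens_ideal2 :: "('a list \<Rightarrow> 'k::field) set \<Rightarrow> ('a list \<times> 'a list \<Rightarrow> 'k) set" where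
  "tens_ideal2 J = lspan ({tens j (mon w) | j w. j \<in> J} \<union> {tens (mon w) j | j w. j \<in> J})"

definition tens_ideal3 :: "('a list \<Rightarrow> 'k::field) set \<Rightarrow> ('a list \<times> 'a list \<times> 'a list \<Rightarrow> 'k) set" where
  "tens_ideal3 J = lspan ({tens3 j (mon v) (mon w) | j v w. j \<in> J}
                        \<union> {tens3 (mon u) j (mon w) | j u w. j \<in> J}
                        \<union> {tens3 (mon u) (mon v) j | j u v. j \<in> J})"

text \<open>(\<Delta>\<otimes>id), (id\<otimes>\<Delta>), (\<epsilon>\<otimes>id), (id\<otimes>\<epsilon>) applied to a finitely supported element of F\<otimes>F,
  defined by linear extension from basis tensors.\<close>
definition comul_left :: "(('a list \<Rightarrow> 'k::field) \<Rightarrow> ('a list \<times> 'a list \<Rightarrow> 'k))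
    \<Rightarrow> ('a list \<times> 'a list \<Rightarrow> 'k) \<Rightarrow> ('a list \<times> 'a list \<times> 'a list \<Rightarrow> 'k)" where
  "comul_left D g = (\<lambda>(a, b, c). \<Sum>u\<in>fst ` {p. g p \<noteq> 0}. g (u, c) * D (mon u) (a, b))"

definition comul_right :: "(('a list \<Rightarrow> 'k::field) \<Rightarrow> ('a list \<times> 'a list \<Rightarrow> 'k))
    \<Rightarrow> ('a list \<times> 'a list \<Rightarrow> 'k) \<Rightarrow> ('a list \<times> 'a list \<times> 'a list \<Rightarrow> 'k)" where
  "comul_right D g = (\<lambda>(a, b, c). \<Sum>v\<in>snd ` {p. g p \<noteq> 0}. g (a, v) * D (mon v) (b, c))"

definition counit_left :: "(('a list \<Rightarrow> 'k::field) \<Rightarrow> 'k)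
    \<Rightarrow> ('a list \<times> 'a list \<Rightarrow> 'k) \<Rightarrow> ('a list \<Rightarrow> 'k)" where
  "counit_left E g = (\<lambda>b. \<Sum>u\<in>fst ` {p. g p \<noteq> 0}. g (u, b) * E (mon u))"

definition counit_right :: "(('a list \<Rightarrow> 'k::field) \<Rightarrow> 'k)
    \<Rightarrow> ('a list \<times> 'a list \<Rightarrow> 'k) \<Rightarrow> ('a list \<Rightarrow> 'k)" where
  "counit_right E g = (\<lambda>a. \<Sum>v\<in>snd ` {p. g p \<noteq> 0}. g (a, v) * E (mon v))"

text \<open>D, E are maps on representatives (elements of the free algebra F) describing maps
  \<Delta> : F/J \<rightarrow> (F/J)\<otimes>(F/J) and \<epsilon> : F/J \<rightarrow> k.\<close>
definition is_bialgebra :: "('a list \<Rightarrow> 'k::field) set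
    \<Rightarrow> (('a list \<Rightarrow> 'k) \<Rightarrow> ('a list \<times> 'a list \<Rightarrow> 'k)) \<Rightarrow> (('a list \<Rightarrow> 'k) \<Rightarrow> 'k) \<Rightarrow> bool" where
  "is_bialgebra J D E \<longleftrightarrow>
     (\<forall>a. fin_supp a \<longrightarrow> fin_supp (D a)) \<and>
     (\<forall>a b. fin_supp a \<longrightarrow> fin_supp b \<longrightarrow> a - b \<in> J \<longrightarrow>
        D a - D b \<in> tens_ideal2 J \<and> E a = E b) \<and>
     (\<forall>a b. fin_supp a \<longrightarrow> fin_supp b \<longrightarrow>
        D (a + b) - (D a + D b) \<in> tens_ideal2 J \<and> E (a + b) = E a + E b) \<and>
     (\<forall>c a. fin_supp a \<longrightarrow> D (smul c a) - smul c (D a) \<in> tens_ideal2 J \<and> E (smul c a) = c * E a) \<and>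
     (\<forall>a b. fin_supp a \<longrightarrow> fin_supp b \<longrightarrow>
        D (fmult a b) - fmult2 (D a) (D b) \<in> tens_ideal2 J \<and> E (fmult a b) = E a * E b) \<and>
     D fone - tens fone fone \<in> tens_ideal2 J \<and> E fone = 1 \<and>
     (\<forall>a. fin_supp a \<longrightarrow> comul_left D (D a) - comul_right D (D a) \<in> tens_ideal3 J) \<and>
     (\<forall>a. fin_supp a \<longrightarrow> counit_left E (D a) - a \<in> J \<and> counit_right E (D a) - a \<in> J)"

definition grouplike :: "('a list \<Rightarrow> 'k::field) set
    \<Rightarrow> (('a list \<Rightarrow> 'k) \<Rightarrow> ('a list \<times> 'a list \<Rightarrow> 'k)) \<Rightarrow> (('a list \<Rightarrow> 'k) \<Rightarrow> 'k)
    \<Rightarrow> ('a list \<Rightarrow> 'k) \<Rightarrow> bool" where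
  "grouplike J D E x \<longleftrightarrow> D x - tens x x \<in> tens_ideal2 J \<and> E x = 1"

text \<open>phi (on representatives) induces a k-algebra isomorphism F1/J1 \<cong> F2/K2.\<close>
definition alg_iso_mod :: "('a list \<Rightarrow> 'k::field) set \<Rightarrow> ('b list \<Rightarrow> 'k) set
    \<Rightarrow> (('a list \<Rightarrow> 'k) \<Rightarrow> ('b list \<Rightarrow> 'k)) \<Rightarrow> bool" where
  "alg_iso_mod J1 K2 \<phi> \<longleftrightarrow>
     (\<forall>a. fin_supp a \<longrightarrow> fin_supp (\<phi> a)) \<and>
     (\<forall>a b. fin_supp a \<longrightarrow> fin_supp b \<longrightarrow> (a - b \<in> J1 \<longleftrightarrow> \<phi> a - \<phi> b \<in> K2)) \<and>
     (\<forall>a b. fin_supp a \<longrightarrow> fin_supp b \<longrightarrow> \<phi> (a + b) - (\<phi> a + \<phi> b) \<in> K2) \<and>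
     (\<forall>c a. fin_supp a \<longrightarrow> \<phi> (smul c a) - smul c (\<phi> a) \<in> K2) \<and>
     (\<forall>a b. fin_supp a \<longrightarrow> fin_supp b \<longrightarrow> \<phi> (fmult a b) - fmult (\<phi> a) (\<phi> b) \<in> K2) \<and>
     \<phi> fone - fone \<in> K2 \<and>
     (\<forall>y. fin_supp y \<longrightarrow> (\<exists>x. fin_supp x \<and> \<phi> x - y \<in> K2))"

definition gen_coxeter :: "('i::finite \<Rightarrow> 'i \<Rightarrow> enat) \<Rightarrow> bool" where
  "gen_coxeter M \<longleftrightarrow> (\<forall>i j. M i j = M j i) \<and> (\<forall>i j. i \<noteq> j \<longrightarrow> 2 \<le> M i j)
      \<and> (\<forall>i. M i i \<noteq> \<infinity> \<and> 2 \<le> M i i)"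

definition alt :: "'a \<Rightarrow> 'a \<Rightarrow> nat \<Rightarrow> 'a list" where
  "alt a b m = map (\<lambda>k. if even k then a else b) [0..<m]"

definition braid_pairs :: "('i \<Rightarrow> 'i \<Rightarrow> enat) \<Rightarrow> ('i list \<times> 'i list) set" where
  "braid_pairs M = {(alt i j m, alt j i m) | i j m. i \<noteq> j \<and> M i j = enat m}"

definition NC_ideal :: "('i::finite \<Rightarrow> 'i \<Rightarrow> enat) \<Rightarrow> ('i list \<Rightarrow> 'k::field) set" where
  "NC_ideal M = ideal_gen
     ({mon u - mon v | u v. (u, v) \<in> braid_pairs M}
      \<union> {mon (replicate (the_enat (M i i)) i) | i. True})"

text \<open>Defining ideal of NC~(M) in the free algebra on generators Some i = T_i and None = T_\<infinity>.\<close>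
definition NCt_ideal :: "('i::finite \<Rightarrow> 'i \<Rightarrow> enat) \<Rightarrow> ('i option list \<Rightarrow> 'k::field) set" where
  "NCt_ideal M = ideal_gen
     ({mon (map Some u) - mon (map Some v) | u v. (u, v) \<in> braid_pairs M}
      \<union> {mon (replicate (the_enat (M i i)) (Some i)) - mon [None] | i. True}
      \<union> {mon [Some i, None] - mon [None] | i. True}
      \<union> {mon [None, Some i] - mon [None] | i. True}
      \<union> {mon [None, None] - mon [None]})"

text \<open>Preimage in the free algebra of the subspace k T_\<infinity> of NC~(M).\<close>
definition Tinf_span :: "('i::finite \<Rightarrow> 'i \<Rightarrow> enat) \<Rightarrow> ('i option list \<Rightarrow> 'k::field) set" where
  "Tinf_span M = {j + smul c (mon [None]) | j c. j \<in> NCt_ideal M}"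

end

theory Submission
  imports Defs
begin


abbreviation supp :: "('a \<Rightarrow> 'k::zero) \<Rightarrow> 'a set" where "supp f \<equiv> {x. f x \<noteq> 0}"


lemma smul_apply[simp]: "smul c f x = c * f x" by (simp add: smul_def)
lemma mon_apply: "mon w x = (if x = w then 1 else 0)" by (simp add: mon_def)

lemma fin_supp_zero[simp]: "fin_supp (0::'a\<Rightarrow>'k::zero)" "fin_supp (\<lambda>_. 0::'k)"
  by (auto simp: fin_supp_def)
lemma fin_supp_mon[simp]: "fin_supp (mon w :: 'a \<Rightarrow> 'k::zero_neq_one)"
proof -
  have "{x. (mon w :: 'a \<Rightarrow> 'k) x \<noteq> 0} \<subseteq> {w}" by (auto simp: mon_def)
  thus ?thesis unfolding fin_supp_def using finite_subset by blast
qed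
lemma fin_supp_add[simp]: "fin_supp f \<Longrightarrow> fin_supp g \<Longrightarrow> fin_supp (f + (g::'a\<Rightarrow>'k::monoid_add))"
  unfolding fin_supp_def by (rule finite_subset[of _ "supp f \<union> supp g"]) auto
lemma fin_supp_smul[simp]: "fin_supp f \<Longrightarrow> fin_supp (smul c (f::'a\<Rightarrow>'k::field))"
  unfolding fin_supp_def by (rule finite_subset[of _ "supp f"]) auto
lemma fin_supp_uminus[simp]: "fin_supp f \<Longrightarrow> fin_supp (- (f::'a\<Rightarrow>'k::field))"
  unfolding fin_supp_def by (rule finite_subset[of _ "supp f"]) auto
lemma fin_supp_diff[simp]: "fin_supp f \<Longrightarrow> fin_supp g \<Longrightarrow> fin_supp (f - (g::'a\<Rightarrow>'k::field))"
  unfolding fin_supp_def by (rule finite_subset[of _ "supp f \<union> supp g"]) auto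

lemma supp_induct_aux:
  fixes a :: "'a \<Rightarrow> 'k::field"
  assumes "finite G" "supp a \<subseteq> G" "G \<subseteq> F" "P 0"
    and step: "\<And>c w f. w \<in> F \<Longrightarrow> fin_supp f \<Longrightarrow> P f \<Longrightarrow> P (smul c (mon w) + f)"
  shows "P a"
  using assms(1,2,3)
proof (induction G arbitrary: a rule: finite_induct)
  case empty
  then have "a = 0" by (auto simp: fun_eq_iff)
  then show ?case using assms(4) by (simp add: zero_fun_def)
next
  case (insert w G)
  define f where "f = a(w := 0)"
  have eq: "a = smul (a w) (mon w) + f" by (auto simp: f_def mon_def fun_eq_iff)
  have sf: "supp f \<subseteq> G" using insert.prems by (auto simp: f_def)
  have "P f" using insert.IH[OF sf] insert.prems by auto
  moreover have "fin_supp f" unfolding fin_supp_def using sf insert.hyps finite_subset by blast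
  ultimately show ?case using step[of w f "a w"] insert.prems eq by auto
qed

lemma fin_supp_induct_in[consumes 1, case_names zero step]:
  fixes a :: "'a \<Rightarrow> 'k::field"
  assumes "fin_supp a" "P 0"
    and "\<And>c w f. a w \<noteq> 0 \<Longrightarrow> fin_supp f \<Longrightarrow> P f \<Longrightarrow> P (smul c (mon w) + f)"
  shows "P a"
  using supp_induct_aux[of "supp a" a "supp a" P] assms unfolding fin_supp_def by auto

lemma fin_supp_induct[consumes 1, case_names zero step]:
  fixes a :: "'a \<Rightarrow> 'k::field"
  assumes "fin_supp a" "P 0"
    and "\<And>c w f. fin_supp f \<Longrightarrow> P f \<Longrightarrow> P (smul c (mon w) + f)"
  shows "P a"
  using fin_supp_induct_in[of a P] assms by auto

lemma fmult_add_left: "fmult (f + g) h = fmult f h + fmult (g::'a list \<Rightarrow> 'k::field) h"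
  by (auto simp: fmult_def fun_eq_iff distrib_right sum.distrib)
lemma fmult_add_right: "fmult h (f + g) = fmult h f + fmult h (g::'a list \<Rightarrow> 'k::field)"
  by (auto simp: fmult_def fun_eq_iff distrib_left sum.distrib)
lemma fmult_smul_left: "fmult (smul c f) h = smul c (fmult f (h::'a list \<Rightarrow> 'k::field))"
  by (auto simp: fmult_def fun_eq_iff sum_distrib_left mult.assoc)
lemma fmult_smul_right: "fmult h (smul c f) = smul c (fmult h (f::'a list \<Rightarrow> 'k::field))"
  by (auto simp: fmult_def fun_eq_iff sum_distrib_left mult_ac)
lemma fmult_zero[simp]: "fmult 0 h = 0" "fmult h 0 = (0::'a list \<Rightarrow> 'k::field)"
  by (auto simp: fmult_def fun_eq_iff)
lemma fmult_diff_left: "fmult (f - g) h = fmult f h - fmult (g::'a list \<Rightarrow> 'k::field) h"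
  by (auto simp: fmult_def fun_eq_iff left_diff_distrib sum_subtractf)
lemma fmult_diff_right: "fmult h (f - g) = fmult h f - fmult h (g::'a list \<Rightarrow> 'k::field)"
  by (auto simp: fmult_def fun_eq_iff right_diff_distrib sum_subtractf)

lemma fmult_mon_mon: "fmult (mon u) (mon v) = (mon (u @ v) :: 'a list \<Rightarrow> 'k::field)"
proof (rule ext)
  fix w :: "'a list"
  have "fmult (mon u) (mon v) w = (\<Sum>n\<le>length w. if n = length u then (if w = u @ v then 1 else 0) else (0::'k))"
    unfolding fmult_def
  proof (rule sum.cong[OF refl])
    fix n assume "n \<in> {..length w}"
    then have n: "n \<le> length w" by simp
    have iff: "(take n w = u \<and> drop n w = v) \<longleftrightarrow> (n = length u \<and> w = u @ v)"
    proof
      assume h: "take n w = u \<and> drop n w = v"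
      have "w = u @ v" using append_take_drop_id[of n w] h by simp
      moreover have "length (take n w) = n" using n by simp
      then have "n = length u" using h by simp
      ultimately show "n = length u \<and> w = u @ v" by simp
    next
      assume "n = length u \<and> w = u @ v"
      then show "take n w = u \<and> drop n w = v" by simp
    qed
    have e: "mon u (take n w) * mon v (drop n w) = (if take n w = u \<and> drop n w = v then 1 else (0::'k))"
      by (simp add: mon_def)
    show "mon u (take n w) * mon v (drop n w) = (if n = length u then (if w = u @ v then 1 else 0) else (0::'k))"
      unfolding e iff by simp
  qed
  also have "\<dots> = mon (u @ v) w" by (auto simp: mon_def)
  finally show "fmult (mon u) (mon v) w = (mon (u @ v) w :: 'k)" .
qed


lemma fin_supp_fmult_mon: "fin_supp b \<Longrightarrow> fin_supp (fmult (mon u) (b::'a list \<Rightarrow> 'k::field))"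
proof (induction b rule: fin_supp_induct)
  case zero show "fin_supp (fmult (mon u) (0::'a list \<Rightarrow> 'k))" by simp
next
  case (step d v g)
  show "fin_supp (fmult (mon u) (smul d (mon v) + g))" using step
    by (simp add: fmult_add_right fmult_smul_right fmult_mon_mon)
qed

lemma fin_supp_fmult[simp]: "fin_supp a \<Longrightarrow> fin_supp b \<Longrightarrow> fin_supp (fmult a (b::'a list \<Rightarrow> 'k::field))"
proof (induction a rule: fin_supp_induct)
  case zero show "fin_supp (fmult (0::'a list \<Rightarrow> 'k) b)" by simp
next
  case (step c u f)
  show "fin_supp (fmult (smul c (mon u) + f) b)" using step
    by (simp add: fmult_add_left fmult_smul_left fin_supp_fmult_mon)
qed

lemma smul_add: "smul c (f + g) = smul c f + smul c (g::'a \<Rightarrow> 'k::field)"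
  by (auto simp: fun_eq_iff algebra_simps)
lemma smul_diff: "smul c (f - g) = smul c f - smul c (g::'a \<Rightarrow> 'k::field)"
  by (auto simp: fun_eq_iff algebra_simps)
lemma smul_smul: "smul c (smul d f) = smul (c * d) (f::'a \<Rightarrow> 'k::field)"
  by (auto simp: fun_eq_iff algebra_simps)
lemma smul_zero[simp]: "smul c (0::'a \<Rightarrow> 'k::field) = 0" "smul 0 (f::'a \<Rightarrow> 'k::field) = 0"
  by (auto simp: fun_eq_iff)
lemma smul_one[simp]: "smul 1 (f::'a \<Rightarrow> 'k::field) = f"
  by (auto simp: fun_eq_iff)
lemma minus_as_smul: "f - g = f + smul (-1) (g::'a \<Rightarrow> 'k::field)"
  by (auto simp: fun_eq_iff)

lemma ideal_0[simp]: "(0::'a list \<Rightarrow> 'k::field) \<in> ideal_gen R"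
  using ideal_zero[of R] by (simp add: zero_fun_def)
lemma ideal_diff: "a \<in> ideal_gen R \<Longrightarrow> b \<in> ideal_gen R \<Longrightarrow> a - b \<in> ideal_gen (R::('a list \<Rightarrow> 'k::field) set)"
  unfolding minus_as_smul by (intro ideal_add ideal_smul)
lemma ideal_fin_supp:
  assumes "\<forall>r\<in>R. fin_supp r" "a \<in> ideal_gen (R::('a list \<Rightarrow> 'k::field) set)"
  shows "fin_supp a"
  using assms(2)
proof (induction rule: ideal_gen.induct)
  case ideal_zero show "fin_supp (\<lambda>_. 0::'k)" by simp
next
  case (ideal_gen_in r) show "fin_supp r" using ideal_gen_in assms(1) by auto
next
  case (ideal_add a b) show "fin_supp (a + b)" using ideal_add by simp
next
  case (ideal_smul a c) show "fin_supp (smul c a)" using ideal_smul by simp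
next
  case (ideal_lmult a x) show "fin_supp (fmult x a)" using ideal_lmult by simp
next
  case (ideal_rmult a x) show "fin_supp (fmult a x)" using ideal_rmult by simp
qed

lemma lspan_0[simp]: "(0::'a \<Rightarrow> 'k::field) \<in> lspan S"
  using lspan_zero[of S] by (simp add: zero_fun_def)
lemma lspan_diff: "a \<in> lspan S \<Longrightarrow> b \<in> lspan S \<Longrightarrow> a - b \<in> lspan (S::('a \<Rightarrow> 'k::field) set)"
  unfolding minus_as_smul by (intro lspan_add lspan_smul)

lemma lspan_linear_image:
  fixes L :: "('a \<Rightarrow> 'k::field) \<Rightarrow> ('b \<Rightarrow> 'k)"
  assumes "\<And>a b. L (a + b) = L a + L b" "\<And>c a. L (smul c a) = smul c (L a)" "L 0 = 0"
    "\<And>s. s \<in> S \<Longrightarrow> L s \<in> lspan S'" "x \<in> lspan S"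
  shows "L x \<in> lspan S'"
  using assms(5)
proof (induction rule: lspan.induct)
  case lspan_zero show "L (\<lambda>_. 0) \<in> lspan S'" using assms(3) by (simp add: zero_fun_def[symmetric])
next
  case (lspan_gen s) show "L s \<in> lspan S'" using lspan_gen assms(4) by auto
next
  case (lspan_add a b) show "L (a + b) \<in> lspan S'" using lspan_add assms(1) by (simp add: lspan.lspan_add)
next
  case (lspan_smul a c) show "L (smul c a) \<in> lspan S'" using lspan_smul assms(2) by (simp add: lspan.lspan_smul)
qed

definition Eg :: "('a \<Rightarrow> 'k::field) \<Rightarrow> 'k" where "Eg a = (\<Sum>w\<in>{w. a w \<noteq> 0}. a w)"

lemma Eg_superset: "finite S \<Longrightarrow> {w. a w \<noteq> 0} \<subseteq> S \<Longrightarrow> Eg (a::'a \<Rightarrow> 'k::field) = (\<Sum>w\<in>S. a w)"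
  unfolding Eg_def by (rule sum.mono_neutral_left) auto

lemma Eg_add: "fin_supp a \<Longrightarrow> fin_supp b \<Longrightarrow> Eg (a + b) = Eg a + Eg (b::'a \<Rightarrow> 'k::field)"
proof -
  assume a: "fin_supp a" and b: "fin_supp b"
  let ?S = "{w. a w \<noteq> 0} \<union> {w. b w \<noteq> 0}"
  have f: "finite ?S" using a b by (simp add: fin_supp_def)
  have "Eg (a + b) = (\<Sum>w\<in>?S. (a + b) w)" by (rule Eg_superset[OF f]) auto
  also have "\<dots> = (\<Sum>w\<in>?S. a w) + (\<Sum>w\<in>?S. b w)" by (simp add: sum.distrib)
  also have "(\<Sum>w\<in>?S. a w) = Eg a" by (rule Eg_superset[OF f, symmetric]) auto
  also have "(\<Sum>w\<in>?S. b w) = Eg b" by (rule Eg_superset[OF f, symmetric]) auto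
  finally show ?thesis .
qed

lemma Eg_smul: "fin_supp a \<Longrightarrow> Eg (smul c a) = c * Eg (a::'a \<Rightarrow> 'k::field)"
proof -
  assume a: "fin_supp a"
  let ?S = "{w. a w \<noteq> 0}"
  have f: "finite ?S" using a by (simp add: fin_supp_def)
  have "Eg (smul c a) = (\<Sum>w\<in>?S. smul c a w)" by (rule Eg_superset[OF f]) auto
  also have "\<dots> = c * (\<Sum>w\<in>?S. a w)" by (simp add: sum_distrib_left)
  also have "(\<Sum>w\<in>?S. a w) = Eg a" by (rule Eg_superset[OF f, symmetric]) auto
  finally show ?thesis .
qed

lemma Eg_diff: "fin_supp a \<Longrightarrow> fin_supp b \<Longrightarrow> Eg (a - b) = Eg a - Eg (b::'a \<Rightarrow> 'k::field)"
  unfolding minus_as_smul by (simp add: Eg_add Eg_smul)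

lemma Eg_mon[simp]: "Eg (mon w :: 'a \<Rightarrow> 'k::field) = 1"
proof -
  have "Eg (mon w :: 'a \<Rightarrow> 'k::field) = (\<Sum>x\<in>{w}. mon w x)" by (rule Eg_superset) (auto simp: mon_def)
  then show ?thesis by (simp add: mon_def)
qed

lemma Eg_zero[simp]: "Eg (0::'a \<Rightarrow> 'k::field) = 0"
  by (simp add: Eg_def)

lemma Eg_fmult_mon: "fin_supp b \<Longrightarrow> Eg (fmult (mon u) b) = Eg (b::'a list \<Rightarrow> 'k::field)"
proof (induction b rule: fin_supp_induct)
  case zero show "Eg (fmult (mon u) (0::'a list \<Rightarrow> 'k)) = Eg (0::'a list \<Rightarrow> 'k)" by simp
next
  case (step d v g)
  have "fmult (mon u) (smul d (mon v) + g) = smul d (mon (u @ v)) + fmult (mon u) g"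
    by (simp add: fmult_add_right fmult_smul_right fmult_mon_mon)
  then show "Eg (fmult (mon u) (smul d (mon v) + g)) = Eg (smul d (mon v) + g)" using step
    by (simp add: Eg_add Eg_smul fin_supp_fmult_mon)
qed

lemma Eg_fmult: "fin_supp a \<Longrightarrow> fin_supp b \<Longrightarrow> Eg (fmult a b) = Eg a * Eg (b::'a list \<Rightarrow> 'k::field)"
proof (induction a rule: fin_supp_induct)
  case zero show "Eg (fmult (0::'a list \<Rightarrow> 'k) b) = Eg (0::'a list \<Rightarrow> 'k) * Eg b" by simp
next
  case (step c u f)
  have "fmult (smul c (mon u) + f) b = smul c (fmult (mon u) b) + fmult f b"
    by (simp add: fmult_add_left fmult_smul_left)
  then show "Eg (fmult (smul c (mon u) + f) b) = Eg (smul c (mon u) + f) * Eg b" using step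
    by (simp add: Eg_add Eg_smul fin_supp_fmult_mon Eg_fmult_mon algebra_simps)
qed

lemma Eg_ideal:
  assumes "\<forall>r\<in>R. \<exists>u v. r = mon u - mon v" "a \<in> ideal_gen (R::('a list \<Rightarrow> 'k::field) set)"
  shows "Eg a = 0"
proof -
  have fsR: "\<forall>r\<in>R. fin_supp r" using assms(1) by fastforce
  show ?thesis using assms(2)
  proof (induction rule: ideal_gen.induct)
    case ideal_zero show "Eg (\<lambda>_. 0::'k) = 0" by (simp add: zero_fun_def[symmetric])
  next
    case (ideal_gen_in r) then obtain u v where "r = mon u - mon v" using assms(1) by blast
    then show "Eg r = 0" by (simp add: Eg_diff)
  next
    case (ideal_add a b) show "Eg (a + b) = 0"
      using ideal_add ideal_fin_supp[OF fsR] by (simp add: Eg_add)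
  next
    case (ideal_smul a c) show "Eg (smul c a) = 0"
      using ideal_smul ideal_fin_supp[OF fsR] by (simp add: Eg_smul)
  next
    case (ideal_lmult a x) show "Eg (fmult x a) = 0"
      using ideal_lmult ideal_fin_supp[OF fsR] by (simp add: Eg_fmult)
  next
    case (ideal_rmult a x) show "Eg (fmult a x) = 0"
      using ideal_rmult ideal_fin_supp[OF fsR] by (simp add: Eg_fmult)
  qed
qed



definition Dg :: "('a \<Rightarrow> 'k::zero) \<Rightarrow> ('a \<times> 'a \<Rightarrow> 'k)" where
  "Dg a = (\<lambda>(u, v). if u = v then a u else 0)"

lemma Dg_add: "Dg (a + b) = Dg a + Dg (b::'a \<Rightarrow> 'k::field)"
  by (auto simp: Dg_def fun_eq_iff)
lemma Dg_smul: "Dg (smul c a) = smul c (Dg (a::'a \<Rightarrow> 'k::field))"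
  by (auto simp: Dg_def fun_eq_iff)
lemma Dg_diff: "Dg (a - b) = Dg a - Dg (b::'a \<Rightarrow> 'k::field)"
  by (auto simp: Dg_def fun_eq_iff)
lemma Dg_zero[simp]: "Dg (0::'a \<Rightarrow> 'k::field) = 0"
  by (auto simp: Dg_def fun_eq_iff)
lemma Dg_mon: "Dg (mon w) = tens (mon w) (mon w :: 'a \<Rightarrow> 'k::field)"
  by (auto simp: Dg_def tens_def mon_def fun_eq_iff)
lemma fin_supp_Dg[simp]: "fin_supp a \<Longrightarrow> fin_supp (Dg (a::'a \<Rightarrow> 'k::field))"
proof -
  assume "fin_supp a"
  then have "finite ((\<lambda>w. (w, w)) ` {w. a w \<noteq> 0})" by (simp add: fin_supp_def)
  moreover have "{p. Dg a p \<noteq> 0} \<subseteq> (\<lambda>w. (w, w)) ` {w. a w \<noteq> 0}"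
    by (auto simp: Dg_def split: if_splits)
  ultimately show ?thesis unfolding fin_supp_def by (rule finite_subset[rotated])
qed

lemma mon_pair: "mon (u, v) = tens (mon u) (mon v :: 'b \<Rightarrow> 'k::field)"
  by (auto simp: tens_def mon_def fun_eq_iff)

lemma fmult2_add_left: "fmult2 (f + g) h = fmult2 f h + fmult2 g (h::'a list \<times> 'a list \<Rightarrow> 'k::field)"
  by (auto simp: fmult2_def fun_eq_iff distrib_right sum.distrib)
lemma fmult2_add_right: "fmult2 h (f + g) = fmult2 h f + fmult2 h (g::'a list \<times> 'a list \<Rightarrow> 'k::field)"
  by (auto simp: fmult2_def fun_eq_iff distrib_left sum.distrib)
lemma fmult2_smul_left: "fmult2 (smul c f) h = smul c (fmult2 f (h::'a list \<times> 'a list \<Rightarrow> 'k::field))"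
  by (auto simp: fmult2_def fun_eq_iff sum_distrib_left mult.assoc)
lemma fmult2_smul_right: "fmult2 h (smul c f) = smul c (fmult2 h (f::'a list \<times> 'a list \<Rightarrow> 'k::field))"
  by (auto simp: fmult2_def fun_eq_iff sum_distrib_left mult_ac)
lemma fmult2_zero[simp]: "fmult2 0 h = 0" "fmult2 h 0 = (0::'a list \<times> 'a list \<Rightarrow> 'k::field)"
  by (auto simp: fmult2_def fun_eq_iff)
lemma fmult2_diff_left: "fmult2 (f - g) h = fmult2 f h - fmult2 g (h::'a list \<times> 'a list \<Rightarrow> 'k::field)"
  by (auto simp: fmult2_def fun_eq_iff left_diff_distrib sum_subtractf)
lemma fmult2_diff_right: "fmult2 h (f - g) = fmult2 h f - fmult2 h (g::'a list \<times> 'a list \<Rightarrow> 'k::field)"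
  by (auto simp: fmult2_def fun_eq_iff right_diff_distrib sum_subtractf)

lemma fmult2_tens: "fmult2 (tens a b) (tens c d) = tens (fmult a c) (fmult b (d::'a list \<Rightarrow> 'k::field))"
proof (rule ext, clarify)
  fix u v :: "'a list"
  have "fmult2 (tens a b) (tens c d) (u, v) =
     (\<Sum>n\<le>length u. \<Sum>m\<le>length v. (a (take n u) * c (drop n u)) * (b (take m v) * d (drop m v)))"
    by (simp add: fmult2_def tens_def mult_ac)
  also have "\<dots> = (\<Sum>n\<le>length u. a (take n u) * c (drop n u)) * (\<Sum>m\<le>length v. b (take m v) * d (drop m v))"
    by (simp add: sum_product)
  also have "\<dots> = tens (fmult a c) (fmult b d) (u, v)" by (simp add: tens_def fmult_def)
  finally show "fmult2 (tens a b) (tens c d) (u, v) = tens (fmult a c) (fmult b d) (u, v)" .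
qed

lemma Dg_fmult_mon: "fin_supp b \<Longrightarrow> Dg (fmult (mon u) b) = fmult2 (Dg (mon u)) (Dg (b::'a list \<Rightarrow> 'k::field))"
proof (induction b rule: fin_supp_induct)
  case zero show "Dg (fmult (mon u) (0::'a list \<Rightarrow> 'k)) = fmult2 (Dg (mon u)) (Dg (0::'a list \<Rightarrow> 'k))" by simp
next
  case (step d v g)
  have "fmult (mon u) (smul d (mon v) + g) = smul d (mon (u @ v)) + fmult (mon u) g"
    by (simp add: fmult_add_right fmult_smul_right fmult_mon_mon)
  then show "Dg (fmult (mon u) (smul d (mon v) + g)) = fmult2 (Dg (mon u)) (Dg (smul d (mon v) + g))" using step
    by (simp add: Dg_add Dg_smul fmult2_add_right fmult2_smul_right Dg_mon fmult2_tens fmult_mon_mon)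
qed

lemma Dg_fmult: "fin_supp a \<Longrightarrow> fin_supp b \<Longrightarrow> Dg (fmult a b) = fmult2 (Dg a) (Dg (b::'a list \<Rightarrow> 'k::field))"
proof (induction a rule: fin_supp_induct)
  case zero show "Dg (fmult (0::'a list \<Rightarrow> 'k) b) = fmult2 (Dg (0::'a list \<Rightarrow> 'k)) (Dg b)" by simp
next
  case (step c u f)
  have "fmult (smul c (mon u) + f) b = smul c (fmult (mon u) b) + fmult f b"
    by (simp add: fmult_add_left fmult_smul_left)
  then show "Dg (fmult (smul c (mon u) + f) b) = fmult2 (Dg (smul c (mon u) + f)) (Dg b)" using step
    by (simp add: Dg_add Dg_smul fmult2_add_left fmult2_smul_left Dg_fmult_mon)
qed

lemma lspan_smul_add: "x \<in> lspan S \<Longrightarrow> y \<in> lspan S \<Longrightarrow> smul c x + y \<in> lspan S"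
  by (intro lspan_add lspan_smul)

lemma T_gen_rmult:
  fixes J :: "('a list \<Rightarrow> 'k::field) set"
  assumes J: "J = ideal_gen R" and s: "s \<in> {tens j (mon w) | j w. j \<in> J} \<union> {tens (mon w) j | j w. j \<in> J}"
    and q: "fin_supp q"
  shows "fmult2 s q \<in> tens_ideal2 J"
  using q
proof (induction q rule: fin_supp_induct)
  case zero show "fmult2 s (0::'a list \<times> 'a list \<Rightarrow> 'k) \<in> tens_ideal2 J" by (simp add: tens_ideal2_def)
next
  case (step c p f)
  obtain p1 p2 where p: "p = (p1, p2)" by (cases p)
  have "fmult2 s (mon p) \<in> tens_ideal2 J"
  proof -
    from s show ?thesis
    proof
      assume "s \<in> {tens j (mon w) | j w. j \<in> J}"
      then obtain j w where sj: "s = tens j (mon w)" "j \<in> J" by blast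
      have "fmult2 s (mon p) = tens (fmult j (mon p1)) (mon (w @ p2))"
        by (simp add: sj p mon_pair fmult2_tens fmult_mon_mon)
      moreover have "fmult j (mon p1) \<in> J" using sj(2) J by (simp add: ideal_rmult)
      ultimately show ?thesis unfolding tens_ideal2_def by (blast intro: lspan_gen)
    next
      assume "s \<in> {tens (mon w) j | j w. j \<in> J}"
      then obtain j w where sj: "s = tens (mon w) j" "j \<in> J" by blast
      have "fmult2 s (mon p) = tens (mon (w @ p1)) (fmult j (mon p2))"
        by (simp add: sj p mon_pair fmult2_tens fmult_mon_mon)
      moreover have "fmult j (mon p2) \<in> J" using sj(2) J by (simp add: ideal_rmult)
      ultimately show ?thesis unfolding tens_ideal2_def by (blast intro: lspan_gen)
    qed
  qed
  then show "fmult2 s (smul c (mon p) + f) \<in> tens_ideal2 J" using step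
    by (simp add: fmult2_add_right fmult2_smul_right tens_ideal2_def lspan_smul_add)
qed

lemma T_gen_lmult:
  fixes J :: "('a list \<Rightarrow> 'k::field) set"
  assumes J: "J = ideal_gen R" and s: "s \<in> {tens j (mon w) | j w. j \<in> J} \<union> {tens (mon w) j | j w. j \<in> J}"
    and q: "fin_supp q"
  shows "fmult2 q s \<in> tens_ideal2 J"
  using q
proof (induction q rule: fin_supp_induct)
  case zero show "fmult2 (0::'a list \<times> 'a list \<Rightarrow> 'k) s \<in> tens_ideal2 J" by (simp add: tens_ideal2_def)
next
  case (step c p f)
  obtain p1 p2 where p: "p = (p1, p2)" by (cases p)
  have "fmult2 (mon p) s \<in> tens_ideal2 J"
  proof -
    from s show ?thesis
    proof
      assume "s \<in> {tens j (mon w) | j w. j \<in> J}"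
      then obtain j w where sj: "s = tens j (mon w)" "j \<in> J" by blast
      have "fmult2 (mon p) s = tens (fmult (mon p1) j) (mon (p2 @ w))"
        by (simp add: sj p mon_pair fmult2_tens fmult_mon_mon)
      moreover have "fmult (mon p1) j \<in> J" using sj(2) J by (simp add: ideal_lmult)
      ultimately show ?thesis unfolding tens_ideal2_def by (blast intro: lspan_gen)
    next
      assume "s \<in> {tens (mon w) j | j w. j \<in> J}"
      then obtain j w where sj: "s = tens (mon w) j" "j \<in> J" by blast
      have "fmult2 (mon p) s = tens (mon (p1 @ w)) (fmult (mon p2) j)"
        by (simp add: sj p mon_pair fmult2_tens fmult_mon_mon)
      moreover have "fmult (mon p2) j \<in> J" using sj(2) J by (simp add: ideal_lmult)
      ultimately show ?thesis unfolding tens_ideal2_def by (blast intro: lspan_gen)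
    qed
  qed
  then show "fmult2 (smul c (mon p) + f) s \<in> tens_ideal2 J" using step
    by (simp add: fmult2_add_left fmult2_smul_left tens_ideal2_def lspan_smul_add)
qed

lemma T_rmult:
  fixes J :: "('a list \<Rightarrow> 'k::field) set"
  assumes J: "J = ideal_gen R" and t: "t \<in> tens_ideal2 J" and q: "fin_supp q"
  shows "fmult2 t q \<in> tens_ideal2 J"
proof -
  let ?S = "{tens j (mon w) | j w. j \<in> J} \<union> {tens (mon w) j | j w. j \<in> J}"
  have S: "\<And>s. s \<in> ?S \<Longrightarrow> (\<lambda>t. fmult2 t q) s \<in> lspan ?S"
    using T_gen_rmult[OF J _ q] unfolding tens_ideal2_def by blast
  have "(\<lambda>t. fmult2 t q) t \<in> lspan ?S"
    by (rule lspan_linear_image[where L = "\<lambda>t. fmult2 t q", OF _ _ _ S t[unfolded tens_ideal2_def]])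
      (simp_all add: fmult2_add_left fmult2_smul_left)
  then show ?thesis unfolding tens_ideal2_def by simp
qed

lemma T_lmult:
  fixes J :: "('a list \<Rightarrow> 'k::field) set"
  assumes J: "J = ideal_gen R" and t: "t \<in> tens_ideal2 J" and q: "fin_supp q"
  shows "fmult2 q t \<in> tens_ideal2 J"
proof -
  let ?S = "{tens j (mon w) | j w. j \<in> J} \<union> {tens (mon w) j | j w. j \<in> J}"
  have S: "\<And>s. s \<in> ?S \<Longrightarrow> (\<lambda>t. fmult2 q t) s \<in> lspan ?S"
    using T_gen_lmult[OF J _ q] unfolding tens_ideal2_def by blast
  have "(\<lambda>t. fmult2 q t) t \<in> lspan ?S"
    by (rule lspan_linear_image[where L = "\<lambda>t. fmult2 q t", OF _ _ _ S t[unfolded tens_ideal2_def]])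
      (simp_all add: fmult2_add_right fmult2_smul_right)
  then show ?thesis unfolding tens_ideal2_def by simp
qed

lemma Dg_ideal:
  assumes gen: "\<forall>r\<in>R. \<exists>u v. r = mon u - mon v" and a: "a \<in> ideal_gen (R::('a list \<Rightarrow> 'k::field) set)"
  shows "Dg a \<in> tens_ideal2 (ideal_gen R)"
proof -
  have fsR: "\<forall>r\<in>R. fin_supp r" using gen by fastforce
  show ?thesis using a
  proof (induction rule: ideal_gen.induct)
    case ideal_zero show "Dg (\<lambda>_. 0::'k) \<in> tens_ideal2 (ideal_gen R)"
      by (simp add: zero_fun_def[symmetric] tens_ideal2_def)
  next
    case (ideal_gen_in r) then obtain u v where r: "r = mon u - mon v" using gen by blast
    have rJ: "r \<in> ideal_gen R" using ideal_gen_in by (rule ideal_gen.ideal_gen_in)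
    have "Dg r = tens r (mon u) + tens (mon v) r"
      by (auto simp: r Dg_def tens_def mon_def fun_eq_iff)
    moreover have "tens r (mon u) \<in> tens_ideal2 (ideal_gen R)" unfolding tens_ideal2_def
      by (rule lspan_gen) (use rJ in blast)
    moreover have "tens (mon v) r \<in> tens_ideal2 (ideal_gen R)" unfolding tens_ideal2_def
      by (rule lspan_gen) (use rJ in blast)
    ultimately show "Dg r \<in> tens_ideal2 (ideal_gen R)" unfolding tens_ideal2_def
      by (simp add: lspan_add)
  next
    case (ideal_add a b) show "Dg (a + b) \<in> tens_ideal2 (ideal_gen R)"
      using ideal_add by (simp add: Dg_add tens_ideal2_def lspan_add)
  next
    case (ideal_smul a c) show "Dg (smul c a) \<in> tens_ideal2 (ideal_gen R)"
      using ideal_smul by (simp add: Dg_smul tens_ideal2_def lspan_smul)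
  next
    case (ideal_lmult a x) show "Dg (fmult x a) \<in> tens_ideal2 (ideal_gen R)"
      using ideal_lmult ideal_fin_supp[OF fsR] by (simp add: Dg_fmult T_lmult)
  next
    case (ideal_rmult a x) show "Dg (fmult a x) \<in> tens_ideal2 (ideal_gen R)"
      using ideal_rmult ideal_fin_supp[OF fsR] by (simp add: Dg_fmult T_rmult)
  qed
qed



definition Rt :: "('i::finite \<Rightarrow> 'i \<Rightarrow> enat) \<Rightarrow> ('i option list \<Rightarrow> 'k::field) set" where
  "Rt M = ({mon (map Some u) - mon (map Some v) | u v. (u, v) \<in> braid_pairs M}
      \<union> {mon (replicate (the_enat (M i i)) (Some i)) - mon [None] | i. True}
      \<union> {mon [Some i, None] - mon [None] | i. True}
      \<union> {mon [None, Some i] - mon [None] | i. True}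
      \<union> {mon [None, None] - mon [None]})"

lemma NCt_eq: "NCt_ideal M = ideal_gen (Rt M)"
  by (simp add: NCt_ideal_def Rt_def)

lemma Rt_form: "\<forall>r\<in>Rt M. \<exists>u v. r = mon u - mon v"
  unfolding Rt_def by blast

lemma Rt_fin_supp: "\<forall>r\<in>(Rt M :: ('i::finite option list \<Rightarrow> 'k::field) set). fin_supp r"
  using Rt_form[of M] by fastforce

lemma gen_SN: "(mon [Some i, None] - mon [None] :: 'i::finite option list \<Rightarrow> 'k::field) \<in> NCt_ideal M"
  unfolding NCt_eq by (rule ideal_gen_in) (unfold Rt_def, blast)
lemma gen_NS: "(mon [None, Some i] - mon [None] :: 'i::finite option list \<Rightarrow> 'k::field) \<in> NCt_ideal M"
  unfolding NCt_eq by (rule ideal_gen_in) (unfold Rt_def, blast)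
lemma gen_NN: "(mon [None, None] - mon [None] :: 'i::finite option list \<Rightarrow> 'k::field) \<in> NCt_ideal M"
  unfolding NCt_eq by (rule ideal_gen_in) (unfold Rt_def, blast)
lemma gen_rep: "(mon (replicate (the_enat (M i i)) (Some i)) - mon [None] :: 'i::finite option list \<Rightarrow> 'k::field) \<in> NCt_ideal M"
  unfolding NCt_eq by (rule ideal_gen_in) (unfold Rt_def, blast)
lemma gen_braid: "(u, v) \<in> braid_pairs M \<Longrightarrow> (mon (map Some u) - mon (map Some v) :: 'i::finite option list \<Rightarrow> 'k::field) \<in> NCt_ideal M"
  unfolding NCt_eq by (rule ideal_gen_in) (unfold Rt_def, blast)

lemma gen_xN: "(mon [g, None] - mon [None] :: 'i::finite option list \<Rightarrow> 'k::field) \<in> NCt_ideal M"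
  by (cases g) (simp_all add: gen_NN gen_SN)
lemma gen_Nx: "(mon [None, g] - mon [None] :: 'i::finite option list \<Rightarrow> 'k::field) \<in> NCt_ideal M"
  by (cases g) (simp_all add: gen_NN gen_NS)

lemma N_right: "(mon (w @ [None]) - mon [None] :: 'i::finite option list \<Rightarrow> 'k::field) \<in> NCt_ideal M"
proof (induction w)
  case Nil show "(mon ([] @ [None]) - mon [None] :: 'i option list \<Rightarrow> 'k) \<in> NCt_ideal M" by (simp add: NCt_eq)
next
  case (Cons g w)
  have "(mon ((g # w) @ [None]) - mon [None] :: 'i option list \<Rightarrow> 'k)
      = fmult (mon [g]) (mon (w @ [None]) - mon [None]) + (mon [g, None] - mon [None])"
    by (simp add: fmult_diff_right fmult_mon_mon)
  also have "\<dots> \<in> NCt_ideal M" unfolding NCt_eq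
    using Cons.IH gen_xN[of g M] unfolding NCt_eq by (intro ideal_add ideal_lmult) (assumption | simp)+
  finally show ?case .
qed

lemma N_left: "(mon (None # w) - mon [None] :: 'i::finite option list \<Rightarrow> 'k::field) \<in> NCt_ideal M"
proof (induction w rule: rev_induct)
  case Nil show "(mon [None] - mon [None] :: 'i option list \<Rightarrow> 'k) \<in> NCt_ideal M" by (simp add: NCt_eq)
next
  case (snoc g w)
  have "(mon (None # w @ [g]) - mon [None] :: 'i option list \<Rightarrow> 'k)
      = fmult (mon (None # w) - mon [None]) (mon [g]) + (mon [None, g] - mon [None])"
    by (simp add: fmult_diff_left fmult_mon_mon)
  also have "\<dots> \<in> NCt_ideal M" unfolding NCt_eq
    using snoc.IH gen_Nx[of g M] unfolding NCt_eq by (intro ideal_add ideal_rmult) (assumption | simp)+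
  finally show ?case .
qed

lemma N_mid: "(mon (u @ None # v) - mon [None] :: 'i::finite option list \<Rightarrow> 'k::field) \<in> NCt_ideal M"
proof -
  have "(mon (u @ None # v) - mon [None] :: 'i option list \<Rightarrow> 'k)
      = fmult (mon u) (mon (None # v) - mon [None]) + (mon (u @ [None]) - mon [None])"
    by (simp add: fmult_diff_right fmult_mon_mon)
  also have "\<dots> \<in> NCt_ideal M"
    using N_left[of v M] N_right[of u M] unfolding NCt_eq by (intro ideal_add ideal_lmult) simp_all
  finally show ?thesis .
qed

lemma N_lmult: "fin_supp x \<Longrightarrow> fmult x (mon [None]) - smul (Eg x) (mon [None]) \<in> (NCt_ideal M :: ('i::finite option list \<Rightarrow> 'k::field) set)"
proof (induction x rule: fin_supp_induct)
  case zero show "fmult (0::'i option list \<Rightarrow> 'k) (mon [None]) - smul (Eg (0::'i option list \<Rightarrow> 'k)) (mon [None]) \<in> NCt_ideal M"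
    by (simp add: NCt_eq)
next
  case (step c w f)
  have E: "Eg (smul c (mon w) + f) = c + Eg f" using step by (simp add: Eg_add Eg_smul)
  have F: "fmult (smul c (mon w) + f) (mon [None]) = smul c (mon (w @ [None])) + fmult f (mon [None])"
    by (simp add: fmult_add_left fmult_smul_left fmult_mon_mon)
  have "fmult (smul c (mon w) + f) (mon [None]) - smul (Eg (smul c (mon w) + f)) (mon [None])
      = smul c (mon (w @ [None]) - mon [None]) + (fmult f (mon [None]) - smul (Eg f) (mon [None]))"
    unfolding E F by (simp add: fun_eq_iff algebra_simps)
  also have "\<dots> \<in> NCt_ideal M" using step(2) N_right[of w M] unfolding NCt_eq
    by (intro ideal_add ideal_smul)
  finally show "fmult (smul c (mon w) + f) (mon [None]) - smul (Eg (smul c (mon w) + f)) (mon [None]) \<in> NCt_ideal M" .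
qed

lemma N_rmult: "fin_supp x \<Longrightarrow> fmult (mon [None]) x - smul (Eg x) (mon [None]) \<in> (NCt_ideal M :: ('i::finite option list \<Rightarrow> 'k::field) set)"
proof (induction x rule: fin_supp_induct)
  case zero show "fmult (mon [None]) (0::'i option list \<Rightarrow> 'k) - smul (Eg (0::'i option list \<Rightarrow> 'k)) (mon [None]) \<in> NCt_ideal M"
    by (simp add: NCt_eq)
next
  case (step c w f)
  have E: "Eg (smul c (mon w) + f) = c + Eg f" using step by (simp add: Eg_add Eg_smul)
  have F: "fmult (mon [None]) (smul c (mon w) + f) = smul c (mon (None # w)) + fmult (mon [None]) f"
    by (simp add: fmult_add_right fmult_smul_right fmult_mon_mon)
  have "fmult (mon [None]) (smul c (mon w) + f) - smul (Eg (smul c (mon w) + f)) (mon [None])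
      = smul c (mon (None # w) - mon [None]) + (fmult (mon [None]) f - smul (Eg f) (mon [None]))"
    unfolding E F by (simp add: fun_eq_iff algebra_simps)
  also have "\<dots> \<in> NCt_ideal M" using step(2) N_left[of w M] unfolding NCt_eq
    by (intro ideal_add ideal_smul)
  finally show "fmult (mon [None]) (smul c (mon w) + f) - smul (Eg (smul c (mon w) + f)) (mon [None]) \<in> NCt_ideal M" .
qed

lemma part1:
  "\<forall>(x :: 'i::finite option list \<Rightarrow> 'k::field) c. fin_supp x \<longrightarrow>
            (\<exists>c'. fmult x (smul c (mon [None])) - smul c' (mon [None]) \<in> NCt_ideal M) \<and>
            (\<exists>c'. fmult (smul c (mon [None])) x - smul c' (mon [None]) \<in> NCt_ideal M)"
proof (intro allI impI conjI)
  fix x :: "'i option list \<Rightarrow> 'k" and c assume x: "fin_supp x"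
  have "fmult x (smul c (mon [None])) - smul (c * Eg x) (mon [None])
      = smul c (fmult x (mon [None]) - smul (Eg x) (mon [None]))"
    by (simp add: fmult_smul_right smul_diff smul_smul)
  also have "\<dots> \<in> NCt_ideal M" using N_lmult[OF x, of M] unfolding NCt_eq by (rule ideal_smul)
  finally show "\<exists>c'. fmult x (smul c (mon [None])) - smul c' (mon [None]) \<in> NCt_ideal M" by blast
  have "fmult (smul c (mon [None])) x - smul (c * Eg x) (mon [None])
      = smul c (fmult (mon [None]) x - smul (Eg x) (mon [None]))"
    by (simp add: fmult_smul_left smul_diff smul_smul)
  also have "\<dots> \<in> NCt_ideal M" using N_rmult[OF x, of M] unfolding NCt_eq by (rule ideal_smul)
  finally show "\<exists>c'. fmult (smul c (mon [None])) x - smul c' (mon [None]) \<in> NCt_ideal M" by blast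
qed



lemma fst_supp_Dg: "fst ` {p. Dg a p \<noteq> 0} = {w. (a::'a \<Rightarrow> 'k::field) w \<noteq> 0}"
  by (force simp: Dg_def image_iff split: if_splits)
lemma snd_supp_Dg: "snd ` {p. Dg a p \<noteq> 0} = {w. (a::'a \<Rightarrow> 'k::field) w \<noteq> 0}"
  by (force simp: Dg_def image_iff split: if_splits)

lemma comul_left_Dg: "fin_supp a \<Longrightarrow> comul_left Dg (Dg a) = (\<lambda>(x, y, z). if x = y \<and> y = z then a x else (0::'k::field))"
proof (rule ext, clarify)
  assume fa: "fin_supp a"
  fix x y z :: "'a list"
  let ?S = "{w. a w \<noteq> 0}"
  have "comul_left Dg (Dg a) (x, y, z) = (\<Sum>u\<in>?S. Dg a (u, z) * Dg (mon u) (x, y))"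
    by (simp add: comul_left_def fst_supp_Dg)
  also have "\<dots> = (\<Sum>u\<in>?S. if u = z then (if x = y \<and> y = z then a z else 0) else 0)"
    by (rule sum.cong) (auto simp: Dg_def mon_def)
  also have "\<dots> = (if x = y \<and> y = z then a x else 0)" using fa unfolding fin_supp_def by (subst sum.delta) auto
  finally show "comul_left Dg (Dg a) (x, y, z) = (if x = y \<and> y = z then a x else 0)" .
qed

lemma comul_right_Dg: "fin_supp a \<Longrightarrow> comul_right Dg (Dg a) = (\<lambda>(x, y, z). if x = y \<and> y = z then a x else (0::'k::field))"
proof (rule ext, clarify)
  assume fa: "fin_supp a"
  fix x y z :: "'a list"
  let ?S = "{w. a w \<noteq> 0}"
  have "comul_right Dg (Dg a) (x, y, z) = (\<Sum>v\<in>?S. Dg a (x, v) * Dg (mon v) (y, z))"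
    by (simp add: comul_right_def snd_supp_Dg)
  also have "\<dots> = (\<Sum>v\<in>?S. if v = x then (if x = y \<and> y = z then a x else 0) else 0)"
    by (rule sum.cong) (auto simp: Dg_def mon_def)
  also have "\<dots> = (if x = y \<and> y = z then a x else 0)" using fa unfolding fin_supp_def by (subst sum.delta) auto
  finally show "comul_right Dg (Dg a) (x, y, z) = (if x = y \<and> y = z then a x else 0)" .
qed

lemma counit_left_Dg: "fin_supp a \<Longrightarrow> counit_left Eg (Dg a) = (a::'a list \<Rightarrow> 'k::field)"
proof (rule ext)
  assume fa: "fin_supp a"
  fix b :: "'a list"
  let ?S = "{w. a w \<noteq> 0}"
  have "counit_left Eg (Dg a) b = (\<Sum>u\<in>?S. Dg a (u, b) * Eg (mon u :: 'a list \<Rightarrow> 'k))"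
    by (simp add: counit_left_def fst_supp_Dg)
  also have "\<dots> = (\<Sum>u\<in>?S. if u = b then a b else 0)"
    by (rule sum.cong) (auto simp: Dg_def)
  also have "\<dots> = a b" using fa unfolding fin_supp_def by (subst sum.delta) auto
  finally show "counit_left Eg (Dg a) b = a b" .
qed

lemma counit_right_Dg: "fin_supp a \<Longrightarrow> counit_right Eg (Dg a) = (a::'a list \<Rightarrow> 'k::field)"
proof (rule ext)
  assume fa: "fin_supp a"
  fix b :: "'a list"
  let ?S = "{w. a w \<noteq> 0}"
  have "counit_right Eg (Dg a) b = (\<Sum>u\<in>?S. Dg a (b, u) * Eg (mon u :: 'a list \<Rightarrow> 'k))"
    by (simp add: counit_right_def snd_supp_Dg)
  also have "\<dots> = (\<Sum>u\<in>?S. if u = b then a b else 0)"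
    by (rule sum.cong) (auto simp: Dg_def)
  also have "\<dots> = a b" using fa unfolding fin_supp_def by (subst sum.delta) auto
  finally show "counit_right Eg (Dg a) b = a b" .
qed

lemma T_0[simp]: "(0 :: 'a list \<times> 'a list \<Rightarrow> 'k::field) \<in> tens_ideal2 J"
  by (simp add: tens_ideal2_def)
lemma T3_0[simp]: "(0 :: 'a list \<times> 'a list \<times> 'a list \<Rightarrow> 'k::field) \<in> tens_ideal3 J"
  by (simp add: tens_ideal3_def)
lemma T_add: "a \<in> tens_ideal2 J \<Longrightarrow> b \<in> tens_ideal2 J \<Longrightarrow> a + b \<in> tens_ideal2 (J :: ('a list \<Rightarrow> 'k::field) set)"
  by (simp add: tens_ideal2_def lspan_add)
lemma T_smul: "a \<in> tens_ideal2 J \<Longrightarrow> smul c a \<in> tens_ideal2 (J :: ('a list \<Rightarrow> 'k::field) set)"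
  by (simp add: tens_ideal2_def lspan_smul)
lemma T_diff: "a \<in> tens_ideal2 J \<Longrightarrow> b \<in> tens_ideal2 J \<Longrightarrow> a - b \<in> tens_ideal2 (J :: ('a list \<Rightarrow> 'k::field) set)"
  by (simp add: tens_ideal2_def lspan_diff)

lemma Dg_bialg: "is_bialgebra (NCt_ideal M :: ('i::finite option list \<Rightarrow> 'k::field) set) Dg Eg"
proof -
  let ?J = "NCt_ideal M :: ('i option list \<Rightarrow> 'k) set"
  have J: "?J = ideal_gen (Rt M)" by (rule NCt_eq)
  have dg_fone: "Dg fone = tens fone (fone :: 'i option list \<Rightarrow> 'k)" by (simp add: fone_def Dg_mon)
  show ?thesis unfolding is_bialgebra_def
  proof (intro conjI allI impI)
    fix a :: "'i option list \<Rightarrow> 'k" assume "fin_supp a" then show "fin_supp (Dg a)" by simp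
  next
    fix a b :: "'i option list \<Rightarrow> 'k" assume a: "fin_supp a" and b: "fin_supp b" and ab: "a - b \<in> ?J"
    show "Dg a - Dg b \<in> tens_ideal2 ?J" unfolding Dg_diff[symmetric] J
      using Dg_ideal[OF Rt_form ab[unfolded J]] .
    have "Eg (a - b) = 0" using Eg_ideal[OF Rt_form ab[unfolded J]] .
    then show "Eg a = Eg b" using a b by (simp add: Eg_diff)
  next
    fix a b :: "'i option list \<Rightarrow> 'k" assume a: "fin_supp a" and b: "fin_supp b"
    show "Dg (a + b) - (Dg a + Dg b) \<in> tens_ideal2 ?J" by (simp add: Dg_add)
    show "Eg (a + b) = Eg a + Eg b" using a b by (rule Eg_add)
    show "Dg (fmult a b) - fmult2 (Dg a) (Dg b) \<in> tens_ideal2 ?J" using a b by (simp add: Dg_fmult)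
    show "Eg (fmult a b) = Eg a * Eg b" using a b by (rule Eg_fmult)
  next
    fix c and a :: "'i option list \<Rightarrow> 'k" assume a: "fin_supp a"
    show "Dg (smul c a) - smul c (Dg a) \<in> tens_ideal2 ?J" by (simp add: Dg_smul)
    show "Eg (smul c a) = c * Eg a" using a by (rule Eg_smul)
  next
    show "Dg fone - tens fone fone \<in> tens_ideal2 ?J" by (simp add: dg_fone)
    show "Eg (fone :: 'i option list \<Rightarrow> 'k) = 1" by (simp add: fone_def)
  next
    fix a :: "'i option list \<Rightarrow> 'k" assume a: "fin_supp a"
    show "comul_left Dg (Dg a) - comul_right Dg (Dg a) \<in> tens_ideal3 ?J"
      by (simp add: comul_left_Dg[OF a] comul_right_Dg[OF a])
    show "counit_left Eg (Dg a) - a \<in> ?J" by (simp add: counit_left_Dg[OF a] J)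
    show "counit_right Eg (Dg a) - a \<in> ?J" by (simp add: counit_right_Dg[OF a] J)
  qed
qed

lemma Dg_grouplike: "grouplike (NCt_ideal M :: ('i::finite option list \<Rightarrow> 'k::field) set) Dg Eg (mon [g])"
  unfolding grouplike_def by (simp add: Dg_mon)

lemma bialg_unique:
  fixes D' :: "('i::finite option list \<Rightarrow> 'k::field) \<Rightarrow> ('i option list \<times> 'i option list \<Rightarrow> 'k)"
  assumes B: "is_bialgebra (NCt_ideal M) D' E'" and G: "\<forall>g. grouplike (NCt_ideal M) D' E' (mon [g])"
  shows "\<forall>a. fin_supp a \<longrightarrow> D' a - Dg a \<in> tens_ideal2 (NCt_ideal M) \<and> E' a = Eg a"
proof -
  let ?J = "NCt_ideal M :: ('i option list \<Rightarrow> 'k) set"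
  let ?T = "tens_ideal2 ?J"
  have J: "?J = ideal_gen (Rt M)" by (rule NCt_eq)
  note B' = B[unfolded is_bialgebra_def]
  have fsD: "\<And>a. fin_supp a \<Longrightarrow> fin_supp (D' a)" using B' by blast
  have addD: "\<And>a b. fin_supp a \<Longrightarrow> fin_supp b \<Longrightarrow> D' (a + b) - (D' a + D' b) \<in> ?T \<and> E' (a + b) = E' a + E' b"
    using B' by blast
  have smulD: "\<And>c a. fin_supp a \<Longrightarrow> D' (smul c a) - smul c (D' a) \<in> ?T \<and> E' (smul c a) = c * E' a"
    using B' by blast
  have multD: "\<And>a b. fin_supp a \<Longrightarrow> fin_supp b \<Longrightarrow> D' (fmult a b) - fmult2 (D' a) (D' b) \<in> ?T \<and> E' (fmult a b) = E' a * E' b"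
    using B' by blast
  have oneD: "D' fone - tens fone fone \<in> ?T" "E' fone = 1" using B' by blast+
  have mon_case: "D' (mon w) - Dg (mon w) \<in> ?T \<and> E' (mon w) = 1" for w
  proof (induction w)
    case Nil
    show "D' (mon []) - Dg (mon []) \<in> ?T \<and> E' (mon []) = 1"
      using oneD by (simp add: fone_def Dg_mon)
  next
    case (Cons g w)
    have IH1: "D' (mon w) - Dg (mon w) \<in> ?T" and IH2: "E' (mon w) = 1" by (rule conjunct1[OF Cons.IH], rule conjunct2[OF Cons.IH])
    have Gg: "D' (mon [g]) - Dg (mon [g]) \<in> ?T" "E' (mon [g]) = 1"
      using G unfolding grouplike_def by (simp_all add: Dg_mon)
    have e: "mon (g # w) = fmult (mon [g]) (mon w :: 'i option list \<Rightarrow> 'k)" by (simp add: fmult_mon_mon)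
    have m: "D' (mon (g # w)) - fmult2 (D' (mon [g])) (D' (mon w)) \<in> ?T"
      using multD[of "mon [g]" "mon w"] e by simp
    have "fmult2 (D' (mon [g])) (D' (mon w)) - fmult2 (Dg (mon [g])) (Dg (mon w))
       = fmult2 (D' (mon [g]) - Dg (mon [g])) (D' (mon w)) + fmult2 (Dg (mon [g])) (D' (mon w) - Dg (mon w))"
      by (simp add: fmult2_diff_left fmult2_diff_right)
    also have "\<dots> \<in> ?T"
      by (intro T_add T_rmult[OF J] T_lmult[OF J] Gg(1) IH1 fsD) simp_all
    finally have m2: "fmult2 (D' (mon [g])) (D' (mon w)) - fmult2 (Dg (mon [g])) (Dg (mon w)) \<in> ?T" .
    have d: "fmult2 (Dg (mon [g])) (Dg (mon w)) = Dg (mon (g # w) :: 'i option list \<Rightarrow> 'k)"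
      unfolding e by (simp add: Dg_fmult)
    have "D' (mon (g # w)) - Dg (mon (g # w)) = (D' (mon (g # w)) - fmult2 (D' (mon [g])) (D' (mon w)))
        + (fmult2 (D' (mon [g])) (D' (mon w)) - fmult2 (Dg (mon [g])) (Dg (mon w)))"
      unfolding d by simp
    also have "\<dots> \<in> ?T" using m m2 by (rule T_add)
    finally have 1: "D' (mon (g # w)) - Dg (mon (g # w)) \<in> ?T" .
    have "E' (mon (g # w)) = 1" using multD[of "mon [g]" "mon w"] e Gg(2) IH2 by simp
    with 1 show "D' (mon (g # w)) - Dg (mon (g # w)) \<in> ?T \<and> E' (mon (g # w)) = 1" by simp
  qed
  have zeroD: "D' 0 \<in> ?T" "E' 0 = 0"
  proof -
    have "D' (smul 0 fone) - smul 0 (D' fone) \<in> ?T \<and> E' (smul 0 fone) = 0 * E' fone"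
      using smulD[of fone 0] by (simp add: fone_def)
    then show "D' 0 \<in> ?T" "E' 0 = 0" by simp_all
  qed
  show ?thesis
  proof (intro allI impI)
    fix a :: "'i option list \<Rightarrow> 'k" assume "fin_supp a"
    then show "D' a - Dg a \<in> ?T \<and> E' a = Eg a"
    proof (induction a rule: fin_supp_induct)
      case zero show "D' (0::'i option list \<Rightarrow> 'k) - Dg 0 \<in> ?T \<and> E' 0 = Eg (0::'i option list \<Rightarrow> 'k)"
        using zeroD by simp
    next
      case (step c w f)
      have IH: "D' f - Dg f \<in> ?T" "E' f = Eg f" by (rule conjunct1[OF step(2)], rule conjunct2[OF step(2)])
      have fs: "fin_supp (smul c (mon w))" "fin_supp f" using step(1) by simp_all
      have a1: "D' (smul c (mon w) + f) - (D' (smul c (mon w)) + D' f) \<in> ?T"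
        and e1: "E' (smul c (mon w) + f) = E' (smul c (mon w)) + E' f" using addD[OF fs] by simp_all
      have a2: "D' (smul c (mon w)) - smul c (D' (mon w)) \<in> ?T" and e2: "E' (smul c (mon w)) = c * E' (mon w)"
        using smulD[of "mon w" c] by simp_all
      have "D' (smul c (mon w) + f) - Dg (smul c (mon w) + f)
        = (D' (smul c (mon w) + f) - (D' (smul c (mon w)) + D' f)) + (D' (smul c (mon w)) - smul c (D' (mon w)))
          + smul c (D' (mon w) - Dg (mon w)) + (D' f - Dg f)"
        by (simp add: Dg_add Dg_smul smul_diff)
      also have "\<dots> \<in> ?T" using a1 a2 mon_case[of w] IH(1)
        by (intro T_add T_smul) simp_all
      finally have 1: "D' (smul c (mon w) + f) - Dg (smul c (mon w) + f) \<in> ?T" .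
      have "E' (smul c (mon w) + f) = Eg (smul c (mon w) + f)"
        using e1 e2 mon_case[of w] IH(2) fs by (simp add: Eg_add Eg_smul)
      with 1 show "D' (smul c (mon w) + f) - Dg (smul c (mon w) + f) \<in> ?T \<and> E' (smul c (mon w) + f) = Eg (smul c (mon w) + f)"
        by simp
    qed
  qed
qed



definition phi :: "('i list \<Rightarrow> 'k::field) \<Rightarrow> ('i option list \<Rightarrow> 'k)" where
  "phi a = (\<lambda>w. if None \<in> set w then 0 else a (map the w))"
definition psi :: "('i option list \<Rightarrow> 'k::field) \<Rightarrow> ('i list \<Rightarrow> 'k)" where
  "psi b = (\<lambda>w. b (map Some w))"

lemma map_the_Some: "None \<notin> set w \<Longrightarrow> map Some (map the w) = w"
  by (induction w) auto

lemma phi_add: "phi (a + b) = phi a + phi b" by (auto simp: phi_def fun_eq_iff)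
lemma phi_smul: "phi (smul c a) = smul c (phi a)" by (auto simp: phi_def fun_eq_iff)
lemma phi_diff: "phi (a - b) = phi a - phi b" by (auto simp: phi_def fun_eq_iff)
lemma phi_zero[simp]: "phi 0 = 0" by (auto simp: phi_def fun_eq_iff)
lemma psi_add: "psi (a + b) = psi a + psi b" by (auto simp: psi_def fun_eq_iff)
lemma psi_smul: "psi (smul c a) = smul c (psi a)" by (auto simp: psi_def fun_eq_iff)
lemma psi_diff: "psi (a - b) = psi a - psi b" by (auto simp: psi_def fun_eq_iff)
lemma psi_zero[simp]: "psi 0 = 0" by (auto simp: psi_def fun_eq_iff)

lemma phi_mon: "phi (mon u :: 'i list \<Rightarrow> 'k::field) = mon (map Some u)"
proof (rule ext)
  fix w :: "'i option list"
  show "phi (mon u :: 'i list \<Rightarrow> 'k) w = mon (map Some u) w"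
  proof (cases "None \<in> set w")
    case True then have "w \<noteq> map Some u" by auto
    then show ?thesis using True by (simp add: phi_def mon_def)
  next
    case False
    then have "(map the w = u) = (w = map Some u)" using map_the_Some[OF False] by auto
    then show ?thesis using False by (simp add: phi_def mon_def)
  qed
qed

lemma psi_mon_Some: "psi (mon (map Some u) :: 'i option list \<Rightarrow> 'k::field) = mon u"
  by (auto simp: psi_def mon_def fun_eq_iff inj_map_eq_map)
lemma psi_mon_None: "None \<in> set w \<Longrightarrow> psi (mon w :: 'i option list \<Rightarrow> 'k::field) = 0"
  by (auto simp: psi_def mon_def fun_eq_iff)
lemma psi_phi: "psi (phi a) = a"
  by (auto simp: psi_def phi_def fun_eq_iff)

lemma fin_supp_phi: "fin_supp a \<Longrightarrow> fin_supp (phi (a :: 'i list \<Rightarrow> 'k::field))"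
proof -
  assume "fin_supp a"
  then have "finite (map Some ` {w. a w \<noteq> 0})" by (simp add: fin_supp_def)
  moreover have "{w. phi a w \<noteq> 0} \<subseteq> map Some ` {w. a w \<noteq> 0}"
  proof
    fix w assume "w \<in> {w. phi a w \<noteq> 0}"
    then have n: "None \<notin> set w" and aw: "a (map the w) \<noteq> 0" by (auto simp: phi_def split: if_splits)
    from map_the_Some[OF n] have w: "w = map Some (map the w)" by (rule sym)
    show "w \<in> map Some ` {w. a w \<noteq> 0}" by (rule image_eqI[where f = "map Some" and x = "map the w", OF w]) (simp add: aw)
  qed
  ultimately show ?thesis unfolding fin_supp_def by (rule finite_subset[rotated])
qed

lemma fin_supp_psi: "fin_supp b \<Longrightarrow> fin_supp (psi (b :: 'i option list \<Rightarrow> 'k::field))"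
proof -
  assume "fin_supp b"
  then have "finite (map Some -` {w. b w \<noteq> 0})" unfolding fin_supp_def
    by (rule finite_vimageI) (simp add: inj_on_def)
  then show ?thesis unfolding fin_supp_def psi_def by (simp add: vimage_def)
qed

lemma phi_fmult: "phi (fmult a b) = fmult (phi a) (phi (b :: 'i list \<Rightarrow> 'k::field))"
proof (rule ext)
  fix w :: "'i option list"
  show "phi (fmult a b) w = fmult (phi a) (phi b) w"
  proof (cases "None \<in> set w")
    case True
    have "\<And>n. None \<in> set (take n w) \<or> None \<in> set (drop n w)"
      using True by (metis Un_iff append_take_drop_id set_append)
    then have z: "\<And>n. phi a (take n w) * phi b (drop n w) = 0" by (auto simp: phi_def)
    have "fmult (phi a) (phi b) w = 0" unfolding fmult_def by (simp add: z)
    moreover have "phi (fmult a b) w = 0" using True by (simp add: phi_def)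
    ultimately show ?thesis by simp
  next
    case False
    have "\<And>n. None \<notin> set (take n w)" "\<And>n. None \<notin> set (drop n w)"
      using False by (meson in_set_takeD in_set_dropD)+
    then show ?thesis using False by (simp add: phi_def fmult_def take_map drop_map)
  qed
qed

lemma psi_fmult: "psi (fmult a b) = fmult (psi a) (psi (b :: 'i option list \<Rightarrow> 'k::field))"
  by (auto simp: psi_def fmult_def fun_eq_iff take_map drop_map)

lemma psi_ideal:
  assumes "j \<in> NCt_ideal M"
  shows "psi j \<in> (NC_ideal M :: ('i::finite list \<Rightarrow> 'k::field) set)"
proof -
  let ?RN = "{mon u - mon v | u v. (u, v) \<in> braid_pairs M} \<union> {mon (replicate (the_enat (M i i)) i) | i. True}"
  have N: "NC_ideal M = ideal_gen (?RN :: ('i list \<Rightarrow> 'k) set)" by (simp add: NC_ideal_def)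
  have fsR: "\<forall>r\<in>(Rt M :: ('i option list \<Rightarrow> 'k) set). fin_supp r" by (rule Rt_fin_supp)
  have "j \<in> ideal_gen (Rt M)" using assms by (simp add: NCt_eq)
  then show ?thesis unfolding N
  proof (induction rule: ideal_gen.induct)
    case ideal_zero show "psi (\<lambda>_. 0::'k) \<in> ideal_gen ?RN" by (simp add: zero_fun_def[symmetric])
  next
    case (ideal_gen_in r)
    show "psi r \<in> ideal_gen ?RN"
      using ideal_gen_in unfolding Rt_def
    proof (elim UnE)
      assume "r \<in> {mon (map Some u) - mon (map Some v) | u v. (u, v) \<in> braid_pairs M}"
      then obtain u v where r: "r = mon (map Some u) - mon (map Some v)" "(u, v) \<in> braid_pairs M" by blast
      have "psi r = mon u - mon v" by (simp add: r psi_diff psi_mon_Some)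
      then show ?thesis using r(2) by (auto intro: ideal_gen.ideal_gen_in)
    next
      assume "r \<in> {mon (replicate (the_enat (M i i)) (Some i)) - mon [None] | i. True}"
      then obtain i where r: "r = mon (replicate (the_enat (M i i)) (Some i)) - mon [None]" by blast
      have "psi r = mon (replicate (the_enat (M i i)) i)"
        by (simp add: r psi_diff psi_mon_None psi_mon_Some[of "replicate _ i", simplified map_replicate])
      then show ?thesis by (auto intro: ideal_gen.ideal_gen_in)
    next
      assume "r \<in> {mon [Some i, None] - mon [None] | i. True}"
      then obtain i where r: "r = mon [Some i, None] - mon [None]" by blast
      show ?thesis by (simp add: r psi_diff psi_mon_None)
    next
      assume "r \<in> {mon [None, Some i] - mon [None] | i. True}"
      then obtain i where r: "r = mon [None, Some i] - mon [None]" by blast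
      show ?thesis by (simp add: r psi_diff psi_mon_None)
    next
      assume "r \<in> {mon [None, None] - mon [None]}"
      then have r: "r = mon [None, None] - mon [None]" by blast
      show ?thesis by (simp add: r psi_diff psi_mon_None)
    qed
  next
    case (ideal_add a b) show "psi (a + b) \<in> ideal_gen ?RN"
      unfolding psi_add by (rule ideal_gen.ideal_add[OF ideal_add(3) ideal_add(4)])
  next
    case (ideal_smul a c) show "psi (smul c a) \<in> ideal_gen ?RN"
      unfolding psi_smul by (rule ideal_gen.ideal_smul[OF ideal_smul(2)])
  next
    case (ideal_lmult a x) show "psi (fmult x a) \<in> ideal_gen ?RN"
      unfolding psi_fmult by (rule ideal_gen.ideal_lmult[OF ideal_lmult(3) fin_supp_psi[OF ideal_lmult(2)]])
  next
    case (ideal_rmult a x) show "psi (fmult a x) \<in> ideal_gen ?RN"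
      unfolding psi_fmult by (rule ideal_gen.ideal_rmult[OF ideal_rmult(3) fin_supp_psi[OF ideal_rmult(2)]])
  qed
qed

lemma Tinf_intro: "j \<in> NCt_ideal M \<Longrightarrow> j + smul c (mon [None]) \<in> Tinf_span M"
  unfolding Tinf_span_def by blast
lemma Tinf_J: "j \<in> NCt_ideal M \<Longrightarrow> j \<in> Tinf_span M"
  using Tinf_intro[of j M 0] by simp
lemma Tinf_N: "mon [None] \<in> (Tinf_span M :: ('i::finite option list \<Rightarrow> 'k::field) set)"
  using Tinf_intro[of 0 M 1] by (simp add: NCt_eq)
lemma Tinf_0[simp]: "0 \<in> (Tinf_span M :: ('i::finite option list \<Rightarrow> 'k::field) set)"
  by (rule Tinf_J) (simp add: NCt_eq)
lemma Tinf_elim: "t \<in> Tinf_span M \<Longrightarrow> \<exists>j c. j \<in> NCt_ideal M \<and> t = j + smul c (mon [None])"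
  unfolding Tinf_span_def by blast
lemma Tinf_add: "s \<in> Tinf_span M \<Longrightarrow> t \<in> Tinf_span M \<Longrightarrow> s + t \<in> (Tinf_span M :: ('i::finite option list \<Rightarrow> 'k::field) set)"
proof -
  assume "s \<in> Tinf_span M" "t \<in> Tinf_span M"
  then obtain j1 c1 j2 c2 where "j1 \<in> NCt_ideal M" "s = j1 + smul c1 (mon [None])"
    "j2 \<in> NCt_ideal M" "t = j2 + smul c2 (mon [None])" by (meson Tinf_elim)
  moreover have e: "s + t = (j1 + j2) + smul (c1 + c2) (mon [None])" if "s = j1 + smul c1 (mon [None])" "t = j2 + smul c2 (mon [None])"
    using that by (simp add: fun_eq_iff algebra_simps)
  moreover have "j1 + j2 \<in> NCt_ideal M" if "j1 \<in> NCt_ideal M" "j2 \<in> NCt_ideal M"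
    using that unfolding NCt_eq by (rule ideal_add)
  ultimately show ?thesis by (metis Tinf_intro)
qed
lemma Tinf_smul: "t \<in> Tinf_span M \<Longrightarrow> smul d t \<in> (Tinf_span M :: ('i::finite option list \<Rightarrow> 'k::field) set)"
proof -
  assume "t \<in> Tinf_span M"
  then obtain j c where j: "j \<in> NCt_ideal M" "t = j + smul c (mon [None])" by (meson Tinf_elim)
  have "smul d t = smul d j + smul (d * c) (mon [None])" by (simp add: j smul_add smul_smul)
  then show ?thesis using j(1) by (simp add: NCt_eq Tinf_intro ideal_smul)
qed
lemma Tinf_diff: "s \<in> Tinf_span M \<Longrightarrow> t \<in> Tinf_span M \<Longrightarrow> s - t \<in> (Tinf_span M :: ('i::finite option list \<Rightarrow> 'k::field) set)"
  unfolding minus_as_smul by (intro Tinf_add Tinf_smul)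
lemma Tinf_lmult: "t \<in> Tinf_span M \<Longrightarrow> fin_supp x \<Longrightarrow> fmult x t \<in> (Tinf_span M :: ('i::finite option list \<Rightarrow> 'k::field) set)"
proof -
  assume t: "t \<in> Tinf_span M" and x: "fin_supp x"
  then obtain j c where j: "j \<in> NCt_ideal M" "t = j + smul c (mon [None])" by (meson Tinf_elim)
  have "fmult x t = (fmult x j + smul c (fmult x (mon [None]) - smul (Eg x) (mon [None]))) + smul (c * Eg x) (mon [None])"
    by (simp add: j fmult_add_right fmult_smul_right fun_eq_iff algebra_simps)
  moreover have "fmult x j + smul c (fmult x (mon [None]) - smul (Eg x) (mon [None])) \<in> NCt_ideal M"
    using j(1) N_lmult[OF x, of M] unfolding NCt_eq by (intro ideal_add ideal_smul ideal_lmult x)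
  ultimately show ?thesis by (simp add: Tinf_intro)
qed
lemma Tinf_rmult: "t \<in> Tinf_span M \<Longrightarrow> fin_supp x \<Longrightarrow> fmult t x \<in> (Tinf_span M :: ('i::finite option list \<Rightarrow> 'k::field) set)"
proof -
  assume t: "t \<in> Tinf_span M" and x: "fin_supp x"
  then obtain j c where j: "j \<in> NCt_ideal M" "t = j + smul c (mon [None])" by (meson Tinf_elim)
  have "fmult t x = (fmult j x + smul c (fmult (mon [None]) x - smul (Eg x) (mon [None]))) + smul (c * Eg x) (mon [None])"
    by (simp add: j fmult_add_left fmult_smul_left fun_eq_iff algebra_simps)
  moreover have "fmult j x + smul c (fmult (mon [None]) x - smul (Eg x) (mon [None])) \<in> NCt_ideal M"
    using j(1) N_rmult[OF x, of M] unfolding NCt_eq by (intro ideal_add ideal_smul ideal_rmult x)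
  ultimately show ?thesis by (simp add: Tinf_intro)
qed

lemma phi_ideal:
  assumes "j \<in> (NC_ideal M :: ('i::finite list \<Rightarrow> 'k::field) set)"
  shows "phi j \<in> Tinf_span M"
proof -
  let ?RN = "{mon u - mon v | u v. (u, v) \<in> braid_pairs M} \<union> {mon (replicate (the_enat (M i i)) i) | i. True}"
  have "j \<in> ideal_gen (?RN :: ('i list \<Rightarrow> 'k) set)" using assms by (simp add: NC_ideal_def)
  then show ?thesis
  proof (induction rule: ideal_gen.induct)
    case ideal_zero show "phi (\<lambda>_. 0::'k) \<in> Tinf_span M" by (simp add: zero_fun_def[symmetric])
  next
    case (ideal_gen_in r)
    show "phi r \<in> Tinf_span M" using ideal_gen_in
    proof (elim UnE)
      assume "r \<in> {mon u - mon v | u v. (u, v) \<in> braid_pairs M}"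
      then obtain u v where r: "r = mon u - mon v" "(u, v) \<in> braid_pairs M" by blast
      show ?thesis by (simp add: r phi_diff phi_mon gen_braid Tinf_J)
    next
      assume "r \<in> {mon (replicate (the_enat (M i i)) i) | i. True}"
      then obtain i where r: "r = mon (replicate (the_enat (M i i)) i)" by blast
      have "phi r = (mon (replicate (the_enat (M i i)) (Some i)) - mon [None]) + smul 1 (mon [None])"
        by (simp add: r phi_mon map_replicate)
      then show ?thesis by (simp only:) (rule Tinf_intro[OF gen_rep])
    qed
  next
    case (ideal_add a b) show "phi (a + b) \<in> Tinf_span M"
      unfolding phi_add by (rule Tinf_add[OF ideal_add(3) ideal_add(4)])
  next
    case (ideal_smul a c) show "phi (smul c a) \<in> Tinf_span M"
      unfolding phi_smul by (rule Tinf_smul[OF ideal_smul(2)])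
  next
    case (ideal_lmult a x) show "phi (fmult x a) \<in> Tinf_span M"
      unfolding phi_fmult by (rule Tinf_lmult[OF ideal_lmult(3) fin_supp_phi[OF ideal_lmult(2)]])
  next
    case (ideal_rmult a x) show "phi (fmult a x) \<in> Tinf_span M"
      unfolding phi_fmult by (rule Tinf_rmult[OF ideal_rmult(3) fin_supp_phi[OF ideal_rmult(2)]])
  qed
qed

lemma map_the_Some': "None \<notin> set w \<Longrightarrow> map (Some \<circ> the) w = w"
  by (induction w) auto

lemma Tinf_None_supp:
  assumes "fin_supp r" and nr: "\<And>w. r w \<noteq> 0 \<Longrightarrow> None \<in> set w"
  shows "r \<in> (Tinf_span M :: ('i::finite option list \<Rightarrow> 'k::field) set)"
  using assms(1)
proof (induction r rule: fin_supp_induct_in)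
  case zero show "(0::'i option list \<Rightarrow> 'k) \<in> Tinf_span M" by simp
next
  case (step c w f)
  have "None \<in> set w" using nr step(1) by blast
  then obtain u v where w: "w = u @ None # v" by (meson split_list)
  have "(mon w :: 'i option list \<Rightarrow> 'k) = (mon w - mon [None]) + smul 1 (mon [None])" by simp
  also have "\<dots> \<in> Tinf_span M" unfolding w by (rule Tinf_intro[OF N_mid])
  finally have m: "(mon w :: 'i option list \<Rightarrow> 'k) \<in> Tinf_span M" .
  show "smul c (mon w) + f \<in> Tinf_span M" by (rule Tinf_add[OF Tinf_smul[OF m] step(3)])
qed

lemma iso_phi: "alg_iso_mod (NC_ideal M :: ('i::finite list \<Rightarrow> 'k::field) set) (Tinf_span M) phi"
  unfolding alg_iso_mod_def
proof (intro conjI allI impI)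
  fix a :: "'i list \<Rightarrow> 'k" assume "fin_supp a" then show "fin_supp (phi a)" by (rule fin_supp_phi)
next
  fix a b :: "'i list \<Rightarrow> 'k" assume a: "fin_supp a" and b: "fin_supp b"
  show "(a - b \<in> NC_ideal M) = (phi a - phi b \<in> Tinf_span M)"
  proof
    assume "a - b \<in> NC_ideal M"
    then show "phi a - phi b \<in> Tinf_span M" unfolding phi_diff[symmetric] by (rule phi_ideal)
  next
    assume "phi a - phi b \<in> Tinf_span M"
    then obtain j c where j: "j \<in> NCt_ideal M" "phi (a - b) = j + smul c (mon [None])"
      unfolding phi_diff[symmetric] by (meson Tinf_elim)
    have "a - b = psi (phi (a - b))" by (simp add: psi_phi)
    also have "\<dots> = psi j" by (simp add: j(2) psi_add psi_smul psi_mon_None)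
    finally show "a - b \<in> NC_ideal M" using psi_ideal[OF j(1)] by simp
  qed
  show "phi (a + b) - (phi a + phi b) \<in> Tinf_span M" by (simp add: phi_add)
  show "phi (fmult a b) - fmult (phi a) (phi b) \<in> Tinf_span M" by (simp add: phi_fmult)
next
  fix c and a :: "'i list \<Rightarrow> 'k" assume "fin_supp a"
  show "phi (smul c a) - smul c (phi a) \<in> Tinf_span M" by (simp add: phi_smul)
next
  show "phi fone - fone \<in> (Tinf_span M :: ('i option list \<Rightarrow> 'k) set)" by (simp add: fone_def phi_mon)
next
  fix y :: "'i option list \<Rightarrow> 'k" assume y: "fin_supp y"
  define r where "r = (\<lambda>w. if None \<in> set w then y w else 0)"
  have fr: "fin_supp r"
  proof -
    have "{w. r w \<noteq> 0} \<subseteq> {w. y w \<noteq> 0}" by (auto simp: r_def)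
    then show ?thesis using y unfolding fin_supp_def by (rule finite_subset)
  qed
  have rT: "r \<in> Tinf_span M" by (rule Tinf_None_supp[OF fr]) (auto simp: r_def split: if_splits)
  have "phi (psi y) - y = smul (-1) r"
    by (auto simp: fun_eq_iff phi_def psi_def r_def map_the_Some')
  then have "phi (psi y) - y \<in> Tinf_span M" using Tinf_smul[OF rT] by simp
  then show "\<exists>x. fin_supp x \<and> phi x - y \<in> Tinf_span M" using fin_supp_psi[OF y] by blast
qed

theorem mainTheorem14:
  fixes M :: "'i::finite \<Rightarrow> 'i \<Rightarrow> enat"
  assumes "gen_coxeter M"
  shows "(\<forall>(x :: 'i option list \<Rightarrow> 'k::field) c. fin_supp x \<longrightarrow>
            (\<exists>c'. fmult x (smul c (mon [None])) - smul c' (mon [None]) \<in> NCt_ideal M) \<and>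
            (\<exists>c'. fmult (smul c (mon [None])) x - smul c' (mon [None]) \<in> NCt_ideal M))
       \<and> (\<exists>\<phi>. alg_iso_mod (NC_ideal M :: ('i list \<Rightarrow> 'k) set) (Tinf_span M) \<phi>)
       \<and> (\<exists>D E. is_bialgebra (NCt_ideal M :: ('i option list \<Rightarrow> 'k) set) D E
              \<and> (\<forall>g. grouplike (NCt_ideal M) D E (mon [g]))
              \<and> (\<forall>D' E'. is_bialgebra (NCt_ideal M) D' E'
                       \<and> (\<forall>g. grouplike (NCt_ideal M) D' E' (mon [g]))
                   \<longrightarrow> (\<forall>a. fin_supp a \<longrightarrow> D' a - D a \<in> tens_ideal2 (NCt_ideal M) \<and> E' a = E a)))"
proof (intro conjI)
  show "\<forall>(x :: 'i option list \<Rightarrow> 'k::field) c. fin_supp x \<longrightarrow>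
            (\<exists>c'. fmult x (smul c (mon [None])) - smul c' (mon [None]) \<in> NCt_ideal M) \<and>
            (\<exists>c'. fmult (smul c (mon [None])) x - smul c' (mon [None]) \<in> NCt_ideal M)"
    by (rule part1)
  show "\<exists>\<phi>. alg_iso_mod (NC_ideal M :: ('i list \<Rightarrow> 'k) set) (Tinf_span M) \<phi>"
    using iso_phi by blast
  show "\<exists>D E. is_bialgebra (NCt_ideal M :: ('i option list \<Rightarrow> 'k) set) D E
              \<and> (\<forall>g. grouplike (NCt_ideal M) D E (mon [g]))
              \<and> (\<forall>D' E'. is_bialgebra (NCt_ideal M) D' E'
                       \<and> (\<forall>g. grouplike (NCt_ideal M) D' E' (mon [g]))
                   \<longrightarrow> (\<forall>a. fin_supp a \<longrightarrow> D' a - D a \<in> tens_ideal2 (NCt_ideal M) \<and> E' a = E a))"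
  proof (intro exI conjI allI impI)
    show "is_bialgebra (NCt_ideal M :: ('i option list \<Rightarrow> 'k) set) Dg Eg" by (rule Dg_bialg)
    fix g show "grouplike (NCt_ideal M :: ('i option list \<Rightarrow> 'k) set) Dg Eg (mon [g])" by (rule Dg_grouplike)
  next
    fix D' :: "('i option list \<Rightarrow> 'k) \<Rightarrow> ('i option list \<times> 'i option list \<Rightarrow> 'k)"
      and E' :: "('i option list \<Rightarrow> 'k) \<Rightarrow> 'k" and a :: "'i option list \<Rightarrow> 'k"
    assume h: "is_bialgebra (NCt_ideal M) D' E' \<and> (\<forall>g. grouplike (NCt_ideal M) D' E' (mon [g]))"
      and a: "fin_supp a"
    have "\<forall>a. fin_supp a \<longrightarrow> D' a - Dg a \<in> tens_ideal2 (NCt_ideal M) \<and> E' a = Eg a"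
      using bialg_unique h by blast
    then show "D' a - Dg a \<in> tens_ideal2 (NCt_ideal M)" "E' a = Eg a" using a by blast+
  qed
qed


end
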